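(* For every $\gamma>0$, $n\ge1$ and $p\ge1$, $$\frac{1}{n^\gamma}\max_{1\le k\le n}\|\mathbb{E}_0(S_k)\|_p\le c_\gamma\sum_{k\ge n+1}\frac{1}{k^{\gamma+1}}\|\mathbb{E}_0(S_k)\|_p,$$ where $c_\gamma=3\times2^{2\gamma+1}(2^{\gamma+1}+1)$.
   Context: Let $(\Omega,\mathcal{F},\mathbb{P})$ be a probability space and let $T:\Omega\to\Omega$ be a bijective, bimeasurable, measure-preserving transformation. Let $\mathcal{F}_0\subseteq\mathcal{F}$ be a $\sigma$-algebra with $\mathcal{F}_0\subseteq T^{-1}(\mathcal{F}_0)$, and set $\mathcal{F}_i=T^{-i}(\mathcal{F}_0)$ for $i\in\mathbb{Z}$. Let $X_0$ be $\mathcal{F}_0$-measurable with $\mathbb{E}X_0=0$ and $\mathbb{E}X_0^2<\infty$. Put $X_i=X_0\circ T^i$ and $S_n=\sum_{i=0}^{n-1}X_i$. Write $\mathbb{E}_0(\cdot)=\mathbb{E}(\cdot\mid\mathcal{F}_0)$ and let $\|\cdot\|_p$ be the $\mathbb{L}^p$ norm (possibly infinite). *)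

theory Defs
  imports "HOL-Probability.Probability"
begin

definition lp_norm :: "'a measure \<Rightarrow> real \<Rightarrow> ('a \<Rightarrow> real) \<Rightarrow> ennreal" where
  "lp_norm M p f =
     (let I = (\<integral>\<^sup>+ x. ennreal (\<bar>f x\<bar> powr p) \<partial>M)
      in if I = \<infinity> then \<infinity> else ennreal (enn2real I powr (1 / p)))"

definition partial_sum :: "('a \<Rightarrow> 'a) \<Rightarrow> ('a \<Rightarrow> real) \<Rightarrow> nat \<Rightarrow> 'a \<Rightarrow> real" where
  "partial_sum T X0 n = (\<lambda>\<omega>. \<Sum>i<n. X0 ((T ^^ i) \<omega>))"

end

theory Submission
  imports Defs
begin


lemma abs_powr_convex:
  fixes p :: real assumes p: "p \<ge> 1"
  shows "convex_on UNIV (\<lambda>x::real. \<bar>x\<bar> powr p)"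
proof (rule convex_onI)
  fix t x y :: real assume t: "0 < t" "t < 1"
  have A: "(s * c) powr p \<le> s * c powr p" if "c \<ge> 0" "0 \<le> s" "s \<le> 1" for s c :: real
  proof -
    have "(s * c) powr p = s powr p * c powr p" using that by (simp add: powr_mult)
    also have "\<dots> \<le> s powr 1 * c powr p"
      by (rule mult_right_mono, rule powr_mono') (use that p in auto)
    finally show ?thesis using that by simp
  qed
  have B: "(( 1 - t) * a + t * b) powr p \<le> (1 - t) * a powr p + t * b powr p"
    if "a \<ge> 0" "b \<ge> 0" for a b :: real
  proof (cases "a = 0 \<or> b = 0")
    case True
    then show ?thesis
    proof
      assume "a = 0" then show ?thesis using A[of b t] that t by simp
    next
      assume "b = 0" then show ?thesis using A[of a "1-t"] that t by simp
    qed
  next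
    case False
    then have "a > 0" "b > 0" using that by auto
    then show ?thesis using convex_onD[OF powr_convex[OF p], of t a b] t by auto
  qed
  have "\<bar>(1 - t) *\<^sub>R x + t *\<^sub>R y\<bar> powr p \<le> ((1 - t) * \<bar>x\<bar> + t * \<bar>y\<bar>) powr p"
    by (rule powr_mono2) (use t p in \<open>auto simp: abs_mult intro!: order_trans[OF abs_triangle_ineq]\<close>)
  also have "\<dots> \<le> (1 - t) * \<bar>x\<bar> powr p + t * \<bar>y\<bar> powr p" by (rule B) auto
  finally show "\<bar>(1 - t) *\<^sub>R x + t *\<^sub>R y\<bar> powr p \<le> (1 - t) * \<bar>x\<bar> powr p + t * \<bar>y\<bar> powr p" .
qed auto



lemma lp_norm_cong_AE:
  assumes "AE x in M. f x = g x"
  shows "lp_norm M p f = lp_norm M p g"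
proof -
  have "(\<integral>\<^sup>+ x. ennreal (\<bar>f x\<bar> powr p) \<partial>M) = (\<integral>\<^sup>+ x. ennreal (\<bar>g x\<bar> powr p) \<partial>M)"
    by (rule nn_integral_cong_AE) (use assms in auto)
  then show ?thesis unfolding lp_norm_def by simp
qed

lemma lp_norm_uminus: "lp_norm M p (\<lambda>x. - f x) = lp_norm M p f"
  unfolding lp_norm_def by simp

lemma real_quasi:
  fixes x y z p :: real
  assumes "x \<ge> 0" "y \<ge> 0" "z \<ge> 0" "p \<ge> 1" "z \<le> 2 powr p * (x + y)"
  shows "z powr (1/p) \<le> 4 * (x powr (1/p) + y powr (1/p))"
proof -
  have a: "z powr (1/p) \<le> (2 powr p * (x + y)) powr (1/p)"
    by (rule powr_mono2) (use assms in auto)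
  have b: "(2 powr p * (x + y)) powr (1/p) = 2 * (x + y) powr (1/p)"
    using assms by (simp add: powr_mult powr_powr)
  have c: "(x + y) powr (1/p) \<le> (2 * max x y) powr (1/p)"
    by (rule powr_mono2) (use assms in auto)
  have d: "(2 * max x y) powr (1/p) = 2 powr (1/p) * max x y powr (1/p)"
    using assms by (simp add: powr_mult)
  have e1: "2 powr (1/p) \<le> (2::real)"
    using powr_mono[of "1/p" 1 2] assms by simp
  have e2: "max x y powr (1/p) \<le> x powr (1/p) + y powr (1/p)"
    by (cases "x \<le> y") (auto simp: max_def)
  have e: "2 powr (1/p) * max x y powr (1/p) \<le> 2 * (x powr (1/p) + y powr (1/p))"
    by (rule mult_mono[OF e1 e2]) auto
  show ?thesis using a b c d e by linarith
qed

lemma ennreal_4_sum: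
  assumes "a \<ge> 0" "b \<ge> 0" shows "ennreal (4 * (a + b)) = 4 * (ennreal a + ennreal b)"
proof -
  have "ennreal (4 * (a + b)) = ennreal 4 * ennreal (a + b)"
    by (rule ennreal_mult) (use assms in auto)
  also have "ennreal (a + b) = ennreal a + ennreal b"
    by (rule ennreal_plus) (use assms in auto)
  finally show ?thesis by simp
qed

lemma lp_norm_quasi_triangle:
  assumes [measurable]: "f \<in> borel_measurable M" "g \<in> borel_measurable M" and p: "p \<ge> 1"
  shows "lp_norm M p (\<lambda>x. f x + g x) \<le> 4 * (lp_norm M p f + lp_norm M p g)"
proof -
  define If where "If = (\<integral>\<^sup>+ x. ennreal (\<bar>f x\<bar> powr p) \<partial>M)"
  define Ig where "Ig = (\<integral>\<^sup>+ x. ennreal (\<bar>g x\<bar> powr p) \<partial>M)"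
  define Ih where "Ih = (\<integral>\<^sup>+ x. ennreal (\<bar>f x + g x\<bar> powr p) \<partial>M)"
  have pw: "\<bar>a + b\<bar> powr p \<le> 2 powr p * (\<bar>a\<bar> powr p + \<bar>b\<bar> powr p)" for a b :: real
  proof -
    have "\<bar>a + b\<bar> powr p \<le> (2 * max \<bar>a\<bar> \<bar>b\<bar>) powr p"
      by (rule powr_mono2) (use p in auto)
    also have "\<dots> = 2 powr p * max \<bar>a\<bar> \<bar>b\<bar> powr p" by (simp add: powr_mult)
    also have "\<dots> \<le> 2 powr p * (\<bar>a\<bar> powr p + \<bar>b\<bar> powr p)"
      by (rule mult_left_mono) (auto simp: max_def)
    finally show ?thesis .
  qed
  have "Ih \<le> (\<integral>\<^sup>+ x. ennreal (2 powr p) * (ennreal (\<bar>f x\<bar> powr p) + ennreal (\<bar>g x\<bar> powr p)) \<partial>M)"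
    unfolding Ih_def
    by (rule nn_integral_mono) (use pw in \<open>auto simp flip: ennreal_plus ennreal_mult intro!: ennreal_leI\<close>)
  also have "\<dots> = ennreal (2 powr p) * (If + Ig)"
    unfolding If_def Ig_def by (simp add: nn_integral_cmult nn_integral_add)
  finally have Ih: "Ih \<le> ennreal (2 powr p) * (If + Ig)" .
  show ?thesis
  proof (cases "If = \<infinity> \<or> Ig = \<infinity>")
    case True
    then have "lp_norm M p f + lp_norm M p g = \<infinity>"
      unfolding lp_norm_def If_def[symmetric] Ig_def[symmetric] by auto
    then have "4 * (lp_norm M p f + lp_norm M p g) = \<top>"
      by (metis ennreal_mult_top infinity_ennreal_def zero_neq_numeral)
    then show ?thesis by (metis top_greatest)
  next
    case False
    then have fin: "If < \<infinity>" "Ig < \<infinity>" by (auto simp: less_top)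
    have "ennreal (2 powr p) * (If + Ig) < \<infinity>"
      using fin by (simp add: ennreal_mult_less_top)
    then have "Ih < \<infinity>" using Ih by (rule le_less_trans[rotated])
    then have Ih': "Ih = ennreal (enn2real Ih)" "If = ennreal (enn2real If)" "Ig = ennreal (enn2real Ig)"
      using fin by auto
    have "enn2real Ih \<le> 2 powr p * (enn2real If + enn2real Ig)"
    proof -
      have eq: "ennreal (2 powr p) * (If + Ig) = ennreal (2 powr p * (enn2real If + enn2real Ig))"
        using fin by (simp add: ennreal_mult ennreal_plus)
      have "enn2real Ih \<le> enn2real (ennreal (2 powr p * (enn2real If + enn2real Ig)))"
        using Ih unfolding eq by (rule enn2real_mono) simp
      then show ?thesis by simp
    qed
    from real_quasi[OF _ _ _ p this]
    have R: "enn2real Ih powr (1/p) \<le> 4 * (enn2real If powr (1/p) + enn2real Ig powr (1/p))" by simp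
    have "ennreal (enn2real Ih powr (1/p)) \<le> 4 * (ennreal (enn2real If powr (1/p)) + ennreal (enn2real Ig powr (1/p)))"
    proof -
      have "ennreal (enn2real Ih powr (1/p)) \<le> ennreal (4 * (enn2real If powr (1/p) + enn2real Ig powr (1/p)))"
        using R by (rule ennreal_leI)
      moreover have "ennreal (4 * (enn2real If powr (1/p) + enn2real Ig powr (1/p))) =
          4 * (ennreal (enn2real If powr (1/p)) + ennreal (enn2real Ig powr (1/p)))"
        by (rule ennreal_4_sum) simp_all
      ultimately show ?thesis by (rule ord_le_eq_trans)
    qed
    moreover have "lp_norm M p (\<lambda>x. f x + g x) = ennreal (enn2real Ih powr (1/p))"
      unfolding lp_norm_def Ih_def[symmetric] Let_def using \<open>Ih < \<infinity>\<close> by (intro if_not_P) simp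
    moreover have "lp_norm M p f = ennreal (enn2real If powr (1/p))"
      unfolding lp_norm_def If_def[symmetric] Let_def using fin by (intro if_not_P) simp
    moreover have "lp_norm M p g = ennreal (enn2real Ig powr (1/p))"
      unfolding lp_norm_def Ig_def[symmetric] Let_def using fin by (intro if_not_P) simp
    ultimately show ?thesis by (simp only:)
  qed
qed

lemma lp_norm_invariant:
  assumes [measurable]: "S \<in> measurable M M" "f \<in> borel_measurable M" and D: "distr M M S = M"
  shows "lp_norm M p (\<lambda>x. f (S x)) = lp_norm M p f"
proof -
  have m: "(\<lambda>x. ennreal (\<bar>f x\<bar> powr p)) \<in> borel_measurable (distr M M S)"
    unfolding D by measurable
  have "(\<integral>\<^sup>+ x. ennreal (\<bar>f x\<bar> powr p) \<partial>distr M M S) = (\<integral>\<^sup>+ x. ennreal (\<bar>f (S x)\<bar> powr p) \<partial>M)"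
    by (rule nn_integral_distr[OF assms(1) m])
  then have "(\<integral>\<^sup>+ x. ennreal (\<bar>f (S x)\<bar> powr p) \<partial>M) = (\<integral>\<^sup>+ x. ennreal (\<bar>f x\<bar> powr p) \<partial>M)"
    unfolding D by simp
  then show ?thesis unfolding lp_norm_def by (simp only:)
qed



lemma lp_norm_cond_exp_le:
  assumes P: "prob_space M" and S: "subalgebra M F" and Z[measurable]: "integrable M Z" and p: "p \<ge> 1"
  shows "lp_norm M p (real_cond_exp M F Z) \<le> lp_norm M p Z"
proof -
  interpret prob_space M by (rule P)
  interpret finite_measure_subalgebra M F by standard (rule S)
  have Zm[measurable]: "Z \<in> borel_measurable M" using Z by auto
  define IZ where "IZ = (\<integral>\<^sup>+ x. ennreal (\<bar>Z x\<bar> powr p) \<partial>M)"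
  define IE where "IE = (\<integral>\<^sup>+ x. ennreal (\<bar>real_cond_exp M F Z x\<bar> powr p) \<partial>M)"
  show ?thesis
  proof (cases "IZ = \<infinity>")
    case True
    then have "lp_norm M p Z = \<infinity>" unfolding lp_norm_def IZ_def[symmetric] Let_def by simp
    then show ?thesis by (metis top_greatest infinity_ennreal_def)
  next
    case False
    then have fin: "IZ < \<infinity>" by (simp add: less_top)
    have intq: "integrable M (\<lambda>x. \<bar>Z x\<bar> powr p)"
      by (rule integrableI_nonneg) (use fin in \<open>auto simp: IZ_def\<close>)
    have J: "AE x in M. \<bar>real_cond_exp M F Z x\<bar> powr p \<le> real_cond_exp M F (\<lambda>x. \<bar>Z x\<bar> powr p) x"
      by (rule real_cond_exp_jensens_inequality(2)[where I=UNIV and q="\<lambda>x. \<bar>x\<bar> powr p"])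
         (use Z intq abs_powr_convex[OF p] in auto)
    have pos: "AE x in M. 0 \<le> real_cond_exp M F (\<lambda>x. \<bar>Z x\<bar> powr p) x"
      by (rule real_cond_exp_pos) auto
    have "IE \<le> (\<integral>\<^sup>+ x. ennreal (real_cond_exp M F (\<lambda>x. \<bar>Z x\<bar> powr p) x) \<partial>M)"
      unfolding IE_def by (rule nn_integral_mono_AE) (use J in \<open>auto intro: ennreal_leI\<close>)
    also have "\<dots> = ennreal (\<integral> x. real_cond_exp M F (\<lambda>x. \<bar>Z x\<bar> powr p) x \<partial>M)"
      by (rule nn_integral_eq_integral[OF real_cond_exp_int(1)[OF intq] pos])
    also have "\<dots> = ennreal (\<integral> x. \<bar>Z x\<bar> powr p \<partial>M)"
      by (simp add: real_cond_exp_int(2)[OF intq])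
    also have "\<dots> = IZ"
      unfolding IZ_def by (rule nn_integral_eq_integral[OF intq, symmetric]) auto
    finally have le: "IE \<le> IZ" .
    then have fin2: "IE < \<infinity>" using fin by (rule le_less_trans)
    have "enn2real IE powr (1/p) \<le> enn2real IZ powr (1/p)"
      by (rule powr_mono2) (use p le fin in \<open>auto intro: enn2real_mono\<close>)
    then have "ennreal (enn2real IE powr (1/p)) \<le> ennreal (enn2real IZ powr (1/p))"
      by (rule ennreal_leI)
    moreover have "lp_norm M p (real_cond_exp M F Z) = ennreal (enn2real IE powr (1/p))"
      unfolding lp_norm_def IE_def[symmetric] Let_def using fin2 by (intro if_not_P) simp
    moreover have "lp_norm M p Z = ennreal (enn2real IZ powr (1/p))"
      unfolding lp_norm_def IZ_def[symmetric] Let_def using fin by (intro if_not_P) simp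
    ultimately show ?thesis by (simp only:)
  qed
qed



lemma funpow_measurable: "T \<in> measurable M M \<Longrightarrow> (T ^^ k) \<in> measurable M M"
  by (induction k) (auto simp: measurable_ident_sets)

lemma funpow_distr:
  assumes T: "T \<in> measurable M M" and D: "distr M M T = M"
  shows "distr M M (T ^^ k) = M"
proof (induction k)
  case 0 then show ?case by (simp add: distr_id2)
next
  case (Suc k)
  have "distr M M (T ^^ Suc k) = distr (distr M M (T ^^ k)) M T"
    using distr_distr[OF T funpow_measurable[OF T, of k]] by simp
  then show ?case using Suc D by (simp add: comp_def)
qed

lemma funpow_preimage:
  assumes T: "T \<in> measurable M M" and F: "sets F0 \<subseteq> {T -` A \<inter> space M | A. A \<in> sets F0}"
    and sub: "subalgebra M F0"
  shows "A \<in> sets F0 \<Longrightarrow> \<exists>B \<in> sets F0. A = (T ^^ k) -` B \<inter> space M"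
proof (induction k arbitrary: A)
  case 0
  have "A \<subseteq> space M" using 0 sub by (metis sets.sets_into_space subalgebra_def)
  then show ?case using 0 by (intro bexI[of _ A]) auto
next
  case (Suc k)
  then obtain B where B: "B \<in> sets F0" "A = (T ^^ k) -` B \<inter> space M" by blast
  from F B(1) obtain C where C: "C \<in> sets F0" "B = T -` C \<inter> space M" by blast
  have sp: "(T ^^ k) x \<in> space M" if "x \<in> space M" for x
    using funpow_measurable[OF T, of k] that by (auto simp: measurable_def)
  have "A = (T ^^ Suc k) -` C \<inter> space M"
    using B(2) C(2) sp by auto
  then show ?case using C(1) by blast
qed



lemma cond_exp_shift:
  assumes P: "prob_space M" and T: "T \<in> measurable M M" and D: "distr M M T = M"
    and sub: "subalgebra M F0" and F: "sets F0 \<subseteq> {T -` A \<inter> space M | A. A \<in> sets F0}"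
    and Y: "integrable M Y"
  shows "AE x in M. real_cond_exp M F0 (\<lambda>x. Y ((T ^^ k) x)) x
                  = real_cond_exp M F0 (\<lambda>x. real_cond_exp M F0 Y ((T ^^ k) x)) x"
proof -
  interpret prob_space M by (rule P)
  interpret finite_measure_subalgebra M F0 by standard (rule sub)
  define S where "S = T ^^ k"
  have S[measurable]: "S \<in> measurable M M" unfolding S_def by (rule funpow_measurable[OF T])
  have DS: "distr M M S = M" unfolding S_def by (rule funpow_distr[OF T D])
  have Ym[measurable]: "Y \<in> borel_measurable M" using Y by auto
  have shift_int: "integrable M (\<lambda>x. h (S x))" if "integrable M h" for h :: "'a \<Rightarrow> real"
  proof -
    have hm[measurable]: "h \<in> borel_measurable M" using that by auto
    have "integrable (distr M M S) h" using that DS by simp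
    then show ?thesis using integrable_distr_eq[OF S hm] by simp
  qed
  have EY: "integrable M (real_cond_exp M F0 Y)" by (rule real_cond_exp_int(1)[OF Y])
  have shift_set: "(\<integral>x\<in>A. h (S x) \<partial>M) = (\<integral>x\<in>B. h x \<partial>M)"
    if h[measurable]: "h \<in> borel_measurable M" and B: "B \<in> sets M" and A: "A = S -` B \<inter> space M" for h :: "'a \<Rightarrow> real" and A B
  proof -
    have "(\<integral>x\<in>A. h (S x) \<partial>M) = (\<integral>x. indicator B (S x) * h (S x) \<partial>M)"
      unfolding set_lebesgue_integral_def A
      by (rule Bochner_Integration.integral_cong) (auto simp: indicator_def)
    also have "\<dots> = (\<integral>x. indicator B x * h x \<partial>distr M M S)"
      by (rule integral_distr[symmetric]) (use B in auto)
    also have "\<dots> = (\<integral>x\<in>B. h x \<partial>M)"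
      unfolding DS set_lebesgue_integral_def by simp
    finally show ?thesis .
  qed
  show ?thesis
  proof (unfold S_def[symmetric], rule real_cond_exp_charact)
    fix A assume A: "A \<in> sets F0"
    obtain B where B: "B \<in> sets F0" "A = S -` B \<inter> space M"
      using funpow_preimage[OF T F sub A] unfolding S_def by blast
    have BM: "B \<in> sets M" using B(1) sub by (meson subalgebra_def subsetD)
    have AM: "A \<in> sets M" using A sub by (meson subalgebra_def subsetD)
    have "(\<integral>x\<in>A. Y (S x) \<partial>M) = (\<integral>x\<in>B. Y x \<partial>M)" by (rule shift_set[OF Ym BM B(2)])
    also have "\<dots> = (\<integral>x\<in>B. real_cond_exp M F0 Y x \<partial>M)" by (rule real_cond_exp_intA[OF Y B(1)])
    also have "\<dots> = (\<integral>x\<in>A. real_cond_exp M F0 Y (S x) \<partial>M)"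
      by (rule shift_set[OF _ BM B(2), symmetric]) simp
    also have "\<dots> = (\<integral>x\<in>A. real_cond_exp M F0 (\<lambda>x. real_cond_exp M F0 Y (S x)) x \<partial>M)"
      by (rule real_cond_exp_intA[OF shift_int[OF EY] A])
    finally show "(\<integral>x\<in>A. Y (S x) \<partial>M) = (\<integral>x\<in>A. real_cond_exp M F0 (\<lambda>x. real_cond_exp M F0 Y (S x)) x \<partial>M)" .
  next
    show "integrable M (\<lambda>x. Y (S x))" by (rule shift_int[OF Y])
    show "integrable M (real_cond_exp M F0 (\<lambda>x. real_cond_exp M F0 Y (S x)))"
      by (rule real_cond_exp_int(1)[OF shift_int[OF EY]])
  qed simp
qed



lemma partial_sum_add:
  "partial_sum T X0 (k + j) x = partial_sum T X0 k x + partial_sum T X0 j ((T ^^ k) x)"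
proof (induction j)
  case 0 then show ?case by (simp add: partial_sum_def)
next
  case (Suc j)
  have "(T ^^ (k + j)) x = (T ^^ j) ((T ^^ k) x)" by (simp add: funpow_add add.commute)
  then show ?case using Suc by (simp add: partial_sum_def)
qed

lemma partial_sum_integrable:
  assumes T: "T \<in> measurable M M" and D: "distr M M T = M" and X: "integrable M X0"
  shows "integrable M (partial_sum T X0 m)"
proof -
  have Xm[measurable]: "X0 \<in> borel_measurable M" using X by auto
  have "integrable M (\<lambda>x. X0 ((T ^^ i) x))" for i
  proof -
    have S: "(T ^^ i) \<in> measurable M M" by (rule funpow_measurable[OF T])
    have "integrable (distr M M (T ^^ i)) X0" using X funpow_distr[OF T D] by simp
    then show ?thesis using integrable_distr_eq[OF S Xm] by simp
  qed
  then show ?thesis unfolding partial_sum_def by auto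
qed

lemma subadd_key:
  assumes P: "prob_space M" and T: "T \<in> measurable M M" and D: "distr M M T = M"
    and sub: "subalgebra M F0" and F: "sets F0 \<subseteq> {T -` A \<inter> space M | A. A \<in> sets F0}"
    and X: "integrable M X0" and p: "p \<ge> 1"
  shows "lp_norm M p (real_cond_exp M F0 (partial_sum T X0 k))
     \<le> 4 * (lp_norm M p (real_cond_exp M F0 (partial_sum T X0 (k + j)))
            + lp_norm M p (real_cond_exp M F0 (partial_sum T X0 j)))"
proof -
  interpret prob_space M by (rule P)
  interpret finite_measure_subalgebra M F0 by standard (rule sub)
  define S where "S = T ^^ k"
  have S[measurable]: "S \<in> measurable M M" unfolding S_def by (rule funpow_measurable[OF T])
  have DS: "distr M M S = M" unfolding S_def by (rule funpow_distr[OF T D])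
  have shift_int: "integrable M (\<lambda>x. h (S x))" if "integrable M h" for h :: "'a \<Rightarrow> real"
  proof -
    have hm[measurable]: "h \<in> borel_measurable M" using that by auto
    have "integrable (distr M M S) h" using that DS by simp
    then show ?thesis using integrable_distr_eq[OF S hm] by simp
  qed
  define a where "a = (\<lambda>m. lp_norm M p (real_cond_exp M F0 (partial_sum T X0 m)))"
  define R where "R = (\<lambda>x. partial_sum T X0 j (S x))"
  have Ij: "integrable M (partial_sum T X0 j)" by (rule partial_sum_integrable[OF T D X])
  have Ikj: "integrable M (partial_sum T X0 (k + j))" by (rule partial_sum_integrable[OF T D X])
  have IR: "integrable M R" unfolding R_def by (rule shift_int[OF Ij])
  have eqk: "partial_sum T X0 k = (\<lambda>x. partial_sum T X0 (k + j) x - R x)"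
    unfolding R_def S_def by (rule ext) (simp add: partial_sum_add)
  have ae1: "AE x in M. real_cond_exp M F0 (partial_sum T X0 k) x
      = real_cond_exp M F0 (partial_sum T X0 (k + j)) x + (- real_cond_exp M F0 R x)"
    unfolding eqk using real_cond_exp_diff[OF Ikj IR] by simp
  have "a k = lp_norm M p (\<lambda>x. real_cond_exp M F0 (partial_sum T X0 (k + j)) x + (- real_cond_exp M F0 R x))"
    unfolding a_def by (rule lp_norm_cong_AE[OF ae1])
  also have "\<dots> \<le> 4 * (a (k + j) + lp_norm M p (\<lambda>x. - real_cond_exp M F0 R x))"
    unfolding a_def by (rule lp_norm_quasi_triangle[OF _ _ p]) auto
  also have "lp_norm M p (\<lambda>x. - real_cond_exp M F0 R x) = lp_norm M p (real_cond_exp M F0 R)"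
    by (rule lp_norm_uminus)
  also have "\<dots> = lp_norm M p (real_cond_exp M F0 (\<lambda>x. real_cond_exp M F0 (partial_sum T X0 j) (S x)))"
    unfolding R_def S_def by (rule lp_norm_cong_AE[OF cond_exp_shift[OF P T D sub F Ij]])
  also have "\<dots> \<le> lp_norm M p (\<lambda>x. real_cond_exp M F0 (partial_sum T X0 j) (S x))"
    by (rule lp_norm_cond_exp_le[OF P sub shift_int[OF real_cond_exp_int(1)[OF Ij]] p])
  also have "\<dots> = a j"
    unfolding a_def by (rule lp_norm_invariant[OF S _ DS]) simp
  finally show ?thesis unfolding a_def by (simp add: mult_left_mono add_left_mono)
qed



lemma l4: "(4::real) powr \<gamma> = 2 powr \<gamma> * 2 powr \<gamma>"
proof -
  have "(4::real) = 2 * 2" by simp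
  then have "(4::real) powr \<gamma> = (2 * 2) powr \<gamma>" by (rule arg_cong)
  also have "\<dots> = 2 powr \<gamma> * 2 powr \<gamma>" by (rule powr_mult)
  finally show ?thesis .
qed

lemma l2: "(2::real) powr (2 * \<gamma> + 1) = 2 powr \<gamma> * 2 powr \<gamma> * 2"
proof -
  have "2 * \<gamma> + 1 = \<gamma> + \<gamma> + 1" by (simp only: mult_2)
  then have "(2::real) powr (2 * \<gamma> + 1) = 2 powr (\<gamma> + \<gamma> + 1)" by (rule arg_cong)
  also have "\<dots> = 2 powr \<gamma> * 2 powr \<gamma> * 2 powr 1" by (simp only: powr_add)
  also have "(2::real) powr 1 = 2" by (rule powr_one) simp
  finally show ?thesis .
qed

lemma const_gen:
  fixes Q B Z T :: real
  assumes "Q = T * T" "Z = T * T * 2" "B \<ge> 2" "Q > 0"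
  shows "16 * Q \<le> 3 * Z * (B + 1)"
proof -
  have e: "3 * Z * (B + 1) = (6 * Q) * (B + 1)" using assms by simp
  have d: "(6 * Q) * 3 \<le> (6 * Q) * (B + 1)"
    by (rule mult_left_mono) (use assms in auto)
  show ?thesis unfolding e using d assms(4) by linarith
qed

lemma const_ineq:
  fixes \<gamma> :: real assumes "\<gamma> > 0"
  shows "16 * 4 powr \<gamma> \<le> 3 * 2 powr (2 * \<gamma> + 1) * (2 powr (\<gamma> + 1) + 1)"
proof -
  have b: "2 powr (\<gamma> + 1) \<ge> (2::real)"
  proof -
    have "(2::real) powr 1 \<le> 2 powr (\<gamma> + 1)" by (rule powr_mono) (use assms in auto)
    moreover have "(2::real) powr 1 = 2" by (rule powr_one) simp
    ultimately show ?thesis by simp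
  qed
  have c: "(4::real) powr \<gamma> > 0" by (rule powr_gt_zero[THEN iffD2]) simp
  show ?thesis by (rule const_gen[OF l4 l2 b c])
qed

lemma weight_aux:
  fixes P Q N :: real assumes "P > 0" "N > 0"
  shows "8 * (Q * 4 * (P * N)) / (P * (2 * N)) = 16 * Q"
  using assms by (simp add: field_simps)

lemma weight_real:
  fixes \<gamma> :: real and n :: nat assumes "\<gamma> > 0" "n \<ge> 1"
  shows "8 * (4 * real n) powr (\<gamma> + 1) / (real n powr \<gamma> * (2 * real n)) = 16 * 4 powr \<gamma>"
proof -
  have n: "real n > 0" using assms by simp
  have "(4 * real n) powr (\<gamma> + 1) = 4 powr (\<gamma> + 1) * real n powr (\<gamma> + 1)" by (rule powr_mult)
  also have "(4::real) powr (\<gamma> + 1) = 4 powr \<gamma> * 4 powr 1" by (rule powr_add)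
  also have "(4::real) powr 1 = 4" by (rule powr_one) simp
  also have "real n powr (\<gamma> + 1) = real n powr \<gamma> * real n powr 1" by (rule powr_add)
  also have "real n powr 1 = real n" by (rule powr_one) simp
  finally have eq: "(4 * real n) powr (\<gamma> + 1) = 4 powr \<gamma> * 4 * (real n powr \<gamma> * real n)" .
  have P: "real n powr \<gamma> > 0" using n by simp
  show ?thesis unfolding eq by (rule weight_aux[OF P n])
qed



lemma reindex_block:
  fixes g :: "nat \<Rightarrow> ennreal" and n :: nat
  shows "(\<Sum>i\<in>{n+1..4*n}. g i) = (\<Sum>k<3*n. g (k + n + 1))"
proof -
  have inj: "inj_on (\<lambda>k. k + n + 1) {..<3*n}" by (auto simp: inj_on_def)
  have im: "(\<lambda>k. k + n + 1) ` {..<3*n} = {n+1..4*n}"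
  proof
    show "(\<lambda>k. k + n + 1) ` {..<3*n} \<subseteq> {n+1..4*n}" by auto
    show "{n+1..4*n} \<subseteq> (\<lambda>k. k + n + 1) ` {..<3*n}"
    proof
      fix i assume "i \<in> {n+1..4*n}"
      then have "i = (i - n - 1) + n + 1" "i - n - 1 < 3 * n" by auto
      then show "i \<in> (\<lambda>k. k + n + 1) ` {..<3*n}" by blast
    qed
  qed
  show ?thesis using sum.reindex[OF inj, of g] im by simp
qed

lemma shift_block:
  fixes a :: "nat \<Rightarrow> ennreal" and n k0 :: nat
  assumes "k0 \<le> n"
  shows "(\<Sum>j\<in>{n+1..3*n}. a (k0 + j)) \<le> (\<Sum>i\<in>{n+1..4*n}. a i)"
proof -
  have inj: "inj_on (\<lambda>j. k0 + j) {n+1..3*n}" by (auto simp: inj_on_def)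
  have "(\<Sum>j\<in>{n+1..3*n}. a (k0 + j)) = (\<Sum>i\<in>(\<lambda>j. k0 + j) ` {n+1..3*n}. a i)"
    using sum.reindex[OF inj, of a] by simp
  also have "\<dots> \<le> (\<Sum>i\<in>{n+1..4*n}. a i)"
    by (rule sum_mono2) (use assms in auto)
  finally show ?thesis .
qed

lemma ennreal_assoc8:
  fixes r Q :: real and W :: ennreal
  assumes "r \<ge> 0" "Q \<ge> 0"
  shows "ennreal r * (8 * (ennreal Q * W)) = ennreal (8 * Q * r) * W"
proof -
  have "ennreal (8 * Q * r) = ennreal (8 * Q) * ennreal r" by (rule ennreal_mult) (use assms in auto)
  also have "ennreal (8 * Q) = ennreal 8 * ennreal Q" by (rule ennreal_mult) (use assms in auto)
  finally have "ennreal (8 * Q * r) = 8 * ennreal Q * ennreal r" by simp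
  then show ?thesis by (simp add: ac_simps)
qed

lemma deterministic:
  fixes a :: "nat \<Rightarrow> ennreal" and \<gamma> :: real and n :: nat
  assumes sub: "\<And>k j. a k \<le> 4 * (a (k + j) + a j)" and g: "\<gamma> > 0" and n: "n \<ge> 1"
  shows "ennreal (1 / real n powr \<gamma>) * (MAX k\<in>{1..n}. a k)
     \<le> ennreal (3 * 2 powr (2 * \<gamma> + 1) * (2 powr (\<gamma> + 1) + 1)) *
        (\<Sum>k. ennreal (1 / real (k + n + 1) powr (\<gamma> + 1)) * a (k + n + 1))"
proof -
  define w where "w = (\<lambda>i::nat. ennreal (1 / real i powr (\<gamma> + 1)))"
  define Q where "Q = (4 * real n) powr (\<gamma> + 1)"
  define W where "W = (\<Sum>k<3*n. w (k + n + 1) * a (k + n + 1))"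
  obtain k0 where k0: "k0 \<in> {1..n}" "(MAX k\<in>{1..n}. a k) = a k0"
  proof -
    have "(MAX k\<in>{1..n}. a k) \<in> a ` {1..n}" by (rule Max_in) (use n in auto)
    then show ?thesis using that by auto
  qed
  have card: "card {n+1..3*n} = 2 * n" by simp
  have step1: "of_nat (2 * n) * a k0 \<le> 4 * ((\<Sum>j\<in>{n+1..3*n}. a (k0 + j)) + (\<Sum>j\<in>{n+1..3*n}. a j))"
  proof -
    have "of_nat (2 * n) * a k0 = (\<Sum>j\<in>{n+1..3*n}. a k0)" using card by simp
    also have "\<dots> \<le> (\<Sum>j\<in>{n+1..3*n}. 4 * (a (k0 + j) + a j))" by (rule sum_mono) (rule sub)
    also have "\<dots> = 4 * ((\<Sum>j\<in>{n+1..3*n}. a (k0 + j)) + (\<Sum>j\<in>{n+1..3*n}. a j))"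
      by (simp add: sum_distrib_left sum.distrib)
    finally show ?thesis .
  qed
  have s2: "(\<Sum>j\<in>{n+1..3*n}. a j) \<le> (\<Sum>i\<in>{n+1..4*n}. a i)"
    by (rule sum_mono2) auto
  have s1: "(\<Sum>j\<in>{n+1..3*n}. a (k0 + j)) \<le> (\<Sum>i\<in>{n+1..4*n}. a i)"
    by (rule shift_block) (use k0 in auto)
  have step2: "of_nat (2 * n) * a k0 \<le> 8 * (\<Sum>i\<in>{n+1..4*n}. a i)"
  proof -
    have "of_nat (2 * n) * a k0 \<le> 4 * ((\<Sum>i\<in>{n+1..4*n}. a i) + (\<Sum>i\<in>{n+1..4*n}. a i))"
      using step1 s1 s2 by (meson add_mono mult_left_mono order_trans zero_le)
    also have "\<dots> = 8 * (\<Sum>i\<in>{n+1..4*n}. a i)" by (simp add: mult_2[symmetric] mult.assoc[symmetric])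
    finally show ?thesis .
  qed
  have wQ: "a i \<le> ennreal Q * (w i * a i)" if i: "i \<in> {n+1..4*n}" for i
  proof -
    have ipos: "real i > 0" using i by auto
    have le4: "real i \<le> 4 * real n" using i by auto
    have "real i powr (\<gamma> + 1) \<le> Q" unfolding Q_def by (rule powr_mono2[OF _ _ le4]) (use g ipos in auto)
    then have "1 \<le> Q / real i powr (\<gamma> + 1)" using ipos by simp
    then have "1 \<le> ennreal Q * w i"
      unfolding w_def using ipos by (simp add: ennreal_mult[symmetric] Q_def)
    then have "1 * a i \<le> (ennreal Q * w i) * a i" by (rule mult_right_mono) simp
    then show ?thesis by (simp add: mult.assoc)
  qed
  have step3: "(\<Sum>i\<in>{n+1..4*n}. a i) \<le> ennreal Q * W"
  proof -
    have "(\<Sum>i\<in>{n+1..4*n}. a i) \<le> (\<Sum>i\<in>{n+1..4*n}. ennreal Q * (w i * a i))"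
      by (rule sum_mono) (rule wQ)
    also have "\<dots> = ennreal Q * (\<Sum>i\<in>{n+1..4*n}. w i * a i)" by (simp add: sum_distrib_left)
    also have "(\<Sum>i\<in>{n+1..4*n}. w i * a i) = W" unfolding W_def by (rule reindex_block)
    finally show ?thesis .
  qed
  have step4: "W \<le> (\<Sum>k. w (k + n + 1) * a (k + n + 1))"
    unfolding W_def by (rule sum_le_suminf) auto
  have "ennreal (1 / real n powr \<gamma>) * a k0
      = ennreal (1 / (real n powr \<gamma> * (2 * real n))) * (of_nat (2 * n) * a k0)"
  proof -
    have "ennreal (1 / (real n powr \<gamma> * (2 * real n))) * of_nat (2 * n) = ennreal (1 / real n powr \<gamma>)"
      using n by (simp add: ennreal_of_nat_eq_real_of_nat ennreal_mult[symmetric])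
    then show ?thesis by (simp add: mult.assoc[symmetric])
  qed
  also have "\<dots> \<le> ennreal (1 / (real n powr \<gamma> * (2 * real n))) * (8 * (ennreal Q * W))"
    by (rule mult_left_mono[OF order_trans[OF step2 mult_left_mono[OF step3]]]) simp_all
  also have "\<dots> = ennreal (8 * Q * (1 / (real n powr \<gamma> * (2 * real n)))) * W"
    by (rule ennreal_assoc8) (simp_all add: Q_def)
  also have "8 * Q * (1 / (real n powr \<gamma> * (2 * real n))) = 8 * Q / (real n powr \<gamma> * (2 * real n))"
    by simp
  also have "8 * Q / (real n powr \<gamma> * (2 * real n)) = 16 * 4 powr \<gamma>"
    unfolding Q_def by (rule weight_real[OF g n])
  also have "ennreal (16 * 4 powr \<gamma>) * W \<le> ennreal (3 * 2 powr (2 * \<gamma> + 1) * (2 powr (\<gamma> + 1) + 1)) * W"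
    by (rule mult_right_mono) (use const_ineq[OF g] in \<open>auto intro: ennreal_leI\<close>)
  also have "\<dots> \<le> ennreal (3 * 2 powr (2 * \<gamma> + 1) * (2 powr (\<gamma> + 1) + 1)) *
        (\<Sum>k. w (k + n + 1) * a (k + n + 1))"
    by (rule mult_left_mono[OF step4]) simp
  finally show ?thesis unfolding k0(2) w_def by simp
qed


theorem mainTheorem16:
  fixes M F0 :: "'a measure" and T :: "'a \<Rightarrow> 'a" and X0 :: "'a \<Rightarrow> real"
    and \<gamma> p :: real and n :: nat
  assumes "prob_space M"
    and "bij_betw T (space M) (space M)"
    and "T \<in> measurable M M"
    and "the_inv_into (space M) T \<in> measurable M M"
    and "distr M M T = M"
    and "subalgebra M F0"
    and "sets F0 \<subseteq> {T -` A \<inter> space M | A. A \<in> sets F0}"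
    and "X0 \<in> borel_measurable F0"
    and "integral\<^sup>L M X0 = 0"
    and "integrable M (\<lambda>x. (X0 x)\<^sup>2)"
    and "\<gamma> > 0" and "n \<ge> 1" and "p \<ge> 1"
  shows "ennreal (1 / real n powr \<gamma>) *
           (MAX k\<in>{1..n}. lp_norm M p (real_cond_exp M F0 (partial_sum T X0 k)))
         \<le> ennreal (3 * 2 powr (2 * \<gamma> + 1) * (2 powr (\<gamma> + 1) + 1)) *
           (\<Sum>k. ennreal (1 / real (k + n + 1) powr (\<gamma> + 1)) *
                 lp_norm M p (real_cond_exp M F0 (partial_sum T X0 (k + n + 1))))"
proof -
  interpret prob_space M by (rule assms(1))
  have Xm: "X0 \<in> borel_measurable M" by (rule measurable_from_subalg[OF assms(6) assms(8)])
  have X: "integrable M X0" by (rule square_integrable_imp_integrable[OF Xm assms(10)])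
  show ?thesis
    by (rule deterministic[OF subadd_key[OF assms(1) assms(3) assms(5) assms(6) assms(7) X assms(13)] assms(11) assms(12)])
qed

end
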